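(* Let $k,l,N$ be positive integers with $l>1$, and let proper trigonometric polynomials $\mu_0,\dots,\mu_N$ and $\varphi_1,\dots,\varphi_N$ on $\mathbb{T}^2$ satisfy $$-\partial_1^k\varphi_1=\mu_0,\qquad \partial_2^l\varphi_j-\partial_1^k\varphi_{j+1}=\mu_j\ (j=1,\dots,N-1),\qquad \partial_2^l\varphi_N=\mu_N.$$ Then $$\sum_{j=1}^N\|\varphi_j\|_{W_2^{\frac{k-1}{2},0}(\mathbb{T}^2)}\leqslant C\sum_{j=0}^N\|\mu_j\|_{L^1(\mathbb{T}^2)},$$ where $C$ does not depend on the functions involved.
   Context: The torus is parametrised by $t\mapsto e^{2\pi it}$; $\partial_1,\partial_2$ are derivatives in the parameters; Fourier coefficients are $\hat f(m,n)$. A function is proper if $\hat f(m,n)=0$ whenever $m=0$ or $n=0$. For $\alpha,\beta\geqslant0$, $W_2^{\alpha,\beta}(\mathbb{T}^2)$ consists of distributions $f$ with $\{(1+m^2)^{\alpha/2}(1+n^2)^{\beta/2}\hat f(m,n)\}\in l^2(\mathbb{Z}^2)$, normed by the $l^2$-norm of this sequence. *)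

theory Defs
  imports "HOL-Analysis.Analysis"
begin

text \<open>A trigonometric polynomial on the torus T^2 is represented by its Fourier
coefficient array c :: int \<times> int \<Rightarrow> complex with finite support; the function
itself is tp_eval c, evaluated in the parameters (x,y) \<in> [0,1]^2 of the
parametrisation t \<mapsto> exp(2 pi i t).\<close>

type_synonym coeffs = "int \<times> int \<Rightarrow> complex"

definition trig_poly :: "coeffs \<Rightarrow> bool" where
  "trig_poly c \<longleftrightarrow> finite {p. c p \<noteq> 0}"

definition proper :: "coeffs \<Rightarrow> bool" where
  "proper c \<longleftrightarrow> (\<forall>m n. (m = 0 \<or> n = 0) \<longrightarrow> c (m, n) = 0)"

definition tp_eval :: "coeffs \<Rightarrow> real \<times> real \<Rightarrow> complex" where
  "tp_eval c z = (\<Sum>p\<in>{p. c p \<noteq> 0}.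
      c p * exp (2 * of_real pi * \<i> * of_real (of_int (fst p) * fst z + of_int (snd p) * snd z)))"

definition d1 :: "nat \<Rightarrow> coeffs \<Rightarrow> coeffs" where
  "d1 k c = (\<lambda>(m, n). (2 * of_real pi * \<i> * of_int m) ^ k * c (m, n))"

definition d2 :: "nat \<Rightarrow> coeffs \<Rightarrow> coeffs" where
  "d2 k c = (\<lambda>(m, n). (2 * of_real pi * \<i> * of_int n) ^ k * c (m, n))"

text \<open>L^1 norm on T^2 (normalised Haar measure = Lebesgue measure on [0,1]^2).\<close>
definition L1_norm :: "coeffs \<Rightarrow> real" where
  "L1_norm c = integral (cbox (0, 0) (1, 1)) (\<lambda>z. norm (tp_eval c z))"

text \<open>Mixed Sobolev norm W_2^{alpha,beta}; for finitely supported coefficients the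
l^2 norm is the finite sum below.\<close>
definition W2_norm :: "real \<Rightarrow> real \<Rightarrow> coeffs \<Rightarrow> real" where
  "W2_norm \<alpha> \<beta> c = sqrt (\<Sum>p\<in>{p. c p \<noteq> 0}.
      ((1 + (of_int (fst p))\<^sup>2) powr (\<alpha>/2) * (1 + (of_int (snd p))\<^sup>2) powr (\<beta>/2) * cmod (c p))\<^sup>2)"

end

theory Submission
  imports Defs
begin

lemma int_exp1:
  fixes q :: int
  shows "integral {0..1} (\<lambda>t::real. exp ((2 * of_real pi * \<i> * of_int q) * complex_of_real t)) = (if q = 0 then 1 else 0)"
proof (cases "q = 0")
  case True then show ?thesis by simp
next
  case False
  define a where "a = 2 * of_real pi * \<i> * (of_int q :: complex)"
  have a0: "a \<noteq> 0" using False by (simp add: a_def)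
  have "\<And>t. t \<in> {0..1} \<Longrightarrow> ((\<lambda>x. exp (a * x) / a) has_vector_derivative exp (a * t)) (at t within {0..1::real})"
  proof -
    fix t :: real
    have "((\<lambda>x. exp (a * x) / a) has_field_derivative exp (a * of_real t)) (at (of_real t))"
      using a0 by (auto intro!: derivative_eq_intros)
    from has_complex_derivative_imp_has_vector_derivative[OF has_field_derivative_at_within[OF this, of "cbox (of_real 0) (of_real 1)"]]
    show "((\<lambda>x. exp (a * x) / a) has_vector_derivative exp (a * t)) (at t within {0..1::real})"
      by (simp add: o_def cbox_interval)
  qed
  then have "((\<lambda>t. exp(a * of_real t)) has_integral exp(a * complex_of_real 1)/a - exp(a * of_real 0)/a)  {0..1}"
    by (intro fundamental_theorem_of_calculus) auto
  moreover have "exp (a * 1) = 1"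
  proof -
    have "exp (a * 1) = cis (2 * pi * of_int q)"
      by (simp add: a_def cis_conv_exp mult_ac)
    also have "\<dots> = 1" by (rule cis_multiple_2pi) simp
    finally show ?thesis .
  qed
  ultimately show ?thesis using False by (simp add: integral_unique a_def)
qed

definition E :: "int \<times> int \<Rightarrow> real \<times> real \<Rightarrow> complex" where
  "E q z = exp (2 * of_real pi * \<i> * of_real (of_int (fst q) * fst z + of_int (snd q) * snd z))"

lemma E_split: "E q (x, y) = exp ((2 * of_real pi * \<i> * of_int (fst q)) * complex_of_real x) *
   exp ((2 * of_real pi * \<i> * of_int (snd q)) * complex_of_real y)"
  unfolding E_def by (simp add: exp_add[symmetric] algebra_simps)

lemma E_cont: "continuous_on S (E q)"
  unfolding E_def by (intro continuous_intros)

lemma int_E: "integral (cbox (0,0) (1,1)) (E q) = (if q = (0,0) then 1 else 0)"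
proof -
  have "integral (cbox (0,0) (1,1)) (E q) = integral (cbox 0 1) (\<lambda>x. integral (cbox 0 1) (\<lambda>y. E q (x, y)))"
    by (rule integral_prod_continuous[OF E_cont])
  also have "\<dots> = integral {0..1} (\<lambda>x. exp ((2 * of_real pi * \<i> * of_int (fst q)) * complex_of_real x) *
     integral {0..1} (\<lambda>y. exp ((2 * of_real pi * \<i> * of_int (snd q)) * complex_of_real y)))"
    by (simp add: E_split cbox_interval)
  also have "\<dots> = (if q = (0,0) then 1 else 0)"
    by (cases q) (simp add: int_exp1)
  finally show ?thesis .
qed


lemma E_mult: "E q z * E r z = E (fst q + fst r, snd q + snd r) z"
  unfolding E_def by (simp add: exp_add[symmetric] algebra_simps)

lemma norm_E: "norm (E q z) = 1"
  unfolding E_def by (simp add: norm_exp_eq_Re)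

lemma tp_eval_E: "tp_eval c z = (\<Sum>q\<in>{p. c p \<noteq> 0}. c q * E q z)"
  unfolding tp_eval_def E_def by simp

lemma tp_cont: "continuous_on S (tp_eval c)"
proof -
  have "tp_eval c = (\<lambda>z. \<Sum>q\<in>{p. c p \<noteq> 0}. c q * E q z)" using tp_eval_E by blast
  then show ?thesis by (simp add: continuous_on_sum continuous_on_mult continuous_on_const E_cont)
qed

lemma coeff_bound:
  assumes "trig_poly c"
  shows "cmod (c p) \<le> L1_norm c"
proof -
  let ?S = "{p. c p \<noteq> 0}"
  have fin: "finite ?S" using assms unfolding trig_poly_def .
  let ?mp = "(- fst p, - snd p)"
  have eq: "tp_eval c z * E ?mp z = (\<Sum>q\<in>?S. c q * E (fst q - fst p, snd q - snd p) z)" for z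
    unfolding tp_eval_E sum_distrib_right
    by (intro sum.cong refl) (simp add: mult.assoc E_mult)
  have "integral (cbox (0,0) (1,1)) (\<lambda>z. tp_eval c z * E ?mp z)
      = (\<Sum>q\<in>?S. c q * integral (cbox (0,0) (1,1)) (E (fst q - fst p, snd q - snd p)))"
    unfolding eq
    by (subst integral_sum) (auto simp: fin integrable_continuous E_cont)
  also have "\<dots> = (\<Sum>q\<in>?S. if q = p then c q else 0)"
    by (intro sum.cong refl) (auto simp: int_E prod_eq_iff)
  also have "\<dots> = c p" using fin by (simp add: sum.delta)
  finally have ceq: "c p = integral (cbox (0,0) (1,1)) (\<lambda>z. tp_eval c z * E ?mp z)" by simp
  have "cmod (c p) \<le> integral (cbox (0,0) (1,1)) (\<lambda>z. norm (tp_eval c z))"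
    unfolding ceq
  proof (rule integral_norm_bound_integral)
    show "(\<lambda>z. tp_eval c z * E ?mp z) integrable_on cbox (0, 0) (1, 1)"
      by (intro integrable_continuous continuous_on_mult tp_cont E_cont)
    show "(\<lambda>z. norm (tp_eval c z)) integrable_on cbox (0, 0) (1, 1)"
      by (intro integrable_continuous continuous_on_norm tp_cont)
  qed (simp add: norm_mult norm_E)
  then show ?thesis unfolding L1_norm_def .
qed


definition Zh :: "real \<Rightarrow> real" where "Zh s = (\<Sum>n. real (Suc n) powr (-s))"

lemma summ_Zh: "s > 1 \<Longrightarrow> summable (\<lambda>n. real (Suc n) powr (-s))"
proof -
  assume "s > 1"
  then have "summable (\<lambda>n. real n powr (-s))" by (subst summable_real_powr_iff) simp
  then show ?thesis by (subst summable_Suc_iff)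
qed

lemma Zh_nonneg: "s > 1 \<Longrightarrow> Zh s \<ge> 0"
  unfolding Zh_def by (intro suminf_nonneg summ_Zh) auto

lemma pos_bound:
  assumes "finite G" "G \<subseteq> {0<..}" "s > 1"
  shows "(\<Sum>m\<in>G. \<bar>real_of_int m\<bar> powr (-s)) \<le> Zh s"
proof -
  have inj: "inj_on (\<lambda>m. nat m - 1) G"
  proof (rule inj_onI)
    fix x y assume "x \<in> G" "y \<in> G" "nat x - 1 = nat y - 1"
    moreover have "x > 0" "y > 0" using assms(2) \<open>x \<in> G\<close> \<open>y \<in> G\<close> by auto
    moreover have "nat x > 0" "nat y > 0" using \<open>x > 0\<close> \<open>y > 0\<close> by simp_all
    ultimately have "nat x = nat y" by linarith
    then show "x = y" using \<open>x > 0\<close> \<open>y > 0\<close> by simp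
  qed
  have "(\<Sum>m\<in>G. \<bar>real_of_int m\<bar> powr (-s)) = (\<Sum>n\<in>(\<lambda>m. nat m - 1) ` G. real (Suc n) powr (-s))"
    by (subst sum.reindex[OF inj]) (intro sum.cong refl, use assms(2) in auto)
  also have "\<dots> \<le> Zh s"
    unfolding Zh_def
    by (intro sum_le_suminf summ_Zh assms) (auto simp: assms)
  finally show ?thesis .
qed

lemma int_bound:
  assumes "finite F" "0 \<notin> F" "s > 1"
  shows "(\<Sum>m\<in>F. \<bar>real_of_int m\<bar> powr (-s)) \<le> 2 * Zh s"
proof -
  let ?P = "{m\<in>F. m > 0}" and ?Q = "{m\<in>F. m < 0}"
  have split: "F = ?P \<union> ?Q" using assms(2) by (auto simp: neq_iff) (metis linorder_neqE_linordered_idom)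
  have "(\<Sum>m\<in>F. \<bar>real_of_int m\<bar> powr (-s)) = (\<Sum>m\<in>?P. \<bar>real_of_int m\<bar> powr (-s)) + (\<Sum>m\<in>?Q. \<bar>real_of_int m\<bar> powr (-s))"
    by (subst split, rule sum.union_disjoint) (use assms in auto)
  also have "(\<Sum>m\<in>?Q. \<bar>real_of_int m\<bar> powr (-s)) = (\<Sum>m\<in>uminus ` ?Q. \<bar>real_of_int m\<bar> powr (-s))"
    by (subst sum.reindex) (auto simp: inj_on_def)
  also have "(\<Sum>m\<in>?P. \<bar>real_of_int m\<bar> powr (-s)) \<le> Zh s"
    by (rule pos_bound) (use assms in auto)
  also have "(\<Sum>m\<in>uminus ` ?Q. \<bar>real_of_int m\<bar> powr (-s)) \<le> Zh s"
    by (rule pos_bound) (use assms in auto)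
  finally show ?thesis by simp
qed

lemma pair_bound:
  assumes "finite S" "\<forall>p\<in>S. fst p \<noteq> 0 \<and> snd p \<noteq> 0" "s > 1" "t > 1"
  shows "(\<Sum>p\<in>S. \<bar>real_of_int (fst p)\<bar> powr (-s) * \<bar>real_of_int (snd p)\<bar> powr (-t)) \<le> 2 * Zh s * (2 * Zh t)"
proof -
  have "(\<Sum>p\<in>S. \<bar>real_of_int (fst p)\<bar> powr (-s) * \<bar>real_of_int (snd p)\<bar> powr (-t))
      \<le> (\<Sum>p\<in>fst ` S \<times> snd ` S. \<bar>real_of_int (fst p)\<bar> powr (-s) * \<bar>real_of_int (snd p)\<bar> powr (-t))"
    by (rule sum_mono2) (auto simp: assms(1) rev_image_eqI)
  also have "\<dots> = (\<Sum>m\<in>fst ` S. \<bar>real_of_int m\<bar> powr (-s)) * (\<Sum>n\<in>snd ` S. \<bar>real_of_int n\<bar> powr (-t))"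
    by (simp add: sum_product sum.cartesian_product case_prod_beta)
  also have "\<dots> \<le> 2 * Zh s * (2 * Zh t)"
    by (intro mult_mono int_bound sum_nonneg) (use assms Zh_nonneg in auto)
  finally show ?thesis .
qed


lemma chain_bound:
  fixes A B :: real and x u :: "nat \<Rightarrow> real"
  assumes A: "A \<ge> 0" and B: "B \<ge> 0" and u: "\<And>i. u i \<ge> 0"
    and h0: "A * x 1 = u 0"
    and h1: "\<And>j. j \<in> {1..<N} \<Longrightarrow> A * x (Suc j) \<le> B * x j + u j"
    and h2: "\<And>j. j \<in> {1..<N} \<Longrightarrow> B * x j \<le> A * x (Suc j) + u j"
    and hN: "B * x N = u N"
    and j: "j \<in> {1..N}" and xn: "\<And>i. x i \<ge> 0"
  shows "max A B * x j \<le> (\<Sum>i\<le>N. u i)"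
proof (cases "B \<le> A")
  case True
  have "\<forall>j. 1 \<le> j \<longrightarrow> j \<le> N \<longrightarrow> A * x j \<le> (\<Sum>i<j. u i)"
  proof (rule allI)
    fix j show "1 \<le> j \<longrightarrow> j \<le> N \<longrightarrow> A * x j \<le> (\<Sum>i<j. u i)"
    proof (induction j)
      case 0 then show ?case by simp
    next
      case (Suc j)
      show ?case
      proof (cases "j = 0")
        case True then show ?thesis using h0 by simp
      next
        case False
        show ?thesis
        proof (intro impI)
          assume "Suc j \<le> N"
          then have jin: "j \<in> {1..<N}" using False by auto
          have "A * x (Suc j) \<le> B * x j + u j" using h1[OF jin] .
          also have "B * x j + u j \<le> A * x j + u j" using True xn[of j] by (simp add: mult_right_mono)
          also have "A * x j + u j \<le> (\<Sum>i<j. u i) + u j" using Suc.IH False \<open>Suc j \<le> N\<close> by auto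
          finally show "A * x (Suc j) \<le> (\<Sum>i<Suc j. u i)" by simp
        qed
      qed
    qed
  qed
  then have "A * x j \<le> (\<Sum>i<j. u i)" using j by auto
  also have "\<dots> \<le> (\<Sum>i\<le>N. u i)" using j by (intro sum_mono2) (auto simp: u)
  finally show ?thesis using True by (simp add: max_def)
next
  case False
  have "\<forall>d. d < N \<longrightarrow> B * x (N - d) \<le> (\<Sum>i\<in>{N-d..N}. u i)"
  proof (rule allI)
    fix d show "d < N \<longrightarrow> B * x (N - d) \<le> (\<Sum>i\<in>{N-d..N}. u i)"
    proof (induction d)
      case 0 then show ?case using hN by simp
    next
      case (Suc d)
      show ?case
      proof (intro impI)
        assume dN: "Suc d < N"
        define i where "i = N - Suc d"
        have iin: "i \<in> {1..<N}" using dN by (auto simp: i_def)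
        have si: "Suc i = N - d" using dN by (simp add: i_def)
        have "B * x i \<le> A * x (Suc i) + u i" using h2[OF iin] .
        also have "A * x (Suc i) + u i \<le> B * x (Suc i) + u i" using False xn[of "Suc i"] by (simp add: mult_right_mono)
        also have "B * x (Suc i) + u i \<le> (\<Sum>i\<in>{N-d..N}. u i) + u i" using Suc.IH dN si by auto
        also have "(\<Sum>i\<in>{N-d..N}. u i) + u i = (\<Sum>i\<in>{i..N}. u i)"
        proof -
          have "{i..N} = insert i {N-d..N}" using si dN by auto
          then show ?thesis using si by simp
        qed
        finally show "B * x (N - Suc d) \<le> (\<Sum>i\<in>{N - Suc d..N}. u i)" by (simp add: i_def)
      qed
    qed
  qed
  then have "B * x (N - (N - j)) \<le> (\<Sum>i\<in>{N-(N-j)..N}. u i)" using j by (metis atLeastAtMost_iff diff_less less_le_trans zero_less_one)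
  moreover have "N - (N - j) = j" using j by auto
  ultimately have "B * x j \<le> (\<Sum>i\<in>{j..N}. u i)" using j by auto
  also have "\<dots> \<le> (\<Sum>i\<le>N. u i)" using j by (intro sum_mono2) (auto simp: u)
  finally show ?thesis using False by (simp add: max_def)
qed


lemma w_bound_real:
  fixes X Y :: real and k l :: nat
  assumes X: "X \<ge> 1" and Y: "Y \<ge> 1" and k: "k > 0" and l: "l > 1"
  defines "b \<equiv> (real l + 1) / (2 * real l)"
  shows "(1 + X\<^sup>2) powr ((real k - 1)/2) / (max (X^k) (Y^l))\<^sup>2
     \<le> 2 powr ((real k - 1)/2) * X powr (-(real k * (2 - b) - (real k - 1))) * Y powr (-(real l * b))"
proof -
  define a where "a = (real k - 1)/2"
  have a0: "a \<ge> 0" using k by (simp add: a_def)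
  have b0: "0 < b" "b < 2" using l by (auto simp: b_def field_simps)
  define M where "M = max (X^k) (Y^l)"
  have Xk: "X^k = X powr real k" using X by (simp add: powr_realpow)
  have Yl: "Y^l = Y powr real l" using Y by (simp add: powr_realpow)
  have M1: "M \<ge> 1" using X by (simp add: M_def le_max_iff_disj one_le_power)
  have h1: "(1 + X\<^sup>2) powr a \<le> (2 * X\<^sup>2) powr a"
  proof -
    have X2: "1 \<le> X\<^sup>2" using X by (simp add: one_le_power)
    then show ?thesis using a0 by (intro powr_mono2) auto
  qed
  have h2: "(2 * X\<^sup>2) powr a = 2 powr a * X powr (real k - 1)"
  proof -
    have "(2 * X\<^sup>2) powr a = 2 powr a * (X\<^sup>2) powr a" using X by (simp add: powr_mult)
    also have "(X\<^sup>2) powr a = (X powr 2) powr a" using X powr_realpow[of X 2] by simp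
    also have "\<dots> = X powr (real k - 1)" proof -
      have "2 * a = real k - 1" by (simp add: a_def)
      then show ?thesis by (simp add: powr_powr)
    qed
    finally show ?thesis .
  qed
  have h3: "M\<^sup>2 \<ge> X powr (real k * (2 - b)) * Y powr (real l * b)"
  proof -
    have "M\<^sup>2 = M powr 2" using M1 powr_realpow[of M 2] by simp
    also have "\<dots> = M powr (2 - b) * M powr b" by (simp add: powr_add[symmetric])
    finally have e: "M\<^sup>2 = M powr (2 - b) * M powr b" .
    have i1: "M powr (2 - b) \<ge> (X powr real k) powr (2 - b)"
      using b0 X by (intro powr_mono2) (auto simp: M_def Xk[symmetric])
    have i2: "M powr b \<ge> (Y powr real l) powr b"
      using b0 Y by (intro powr_mono2) (auto simp: M_def Yl[symmetric])
    have "(X powr real k) powr (2 - b) * (Y powr real l) powr b \<le> M powr (2 - b) * M powr b"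
      by (intro mult_mono i1 i2) auto
    then show ?thesis using e by (simp add: powr_powr)
  qed
  have pos: "X powr (real k * (2 - b)) * Y powr (real l * b) > 0" using X Y by simp
  have "(1 + X\<^sup>2) powr a / M\<^sup>2 \<le> 2 powr a * X powr (real k - 1) / (X powr (real k * (2 - b)) * Y powr (real l * b))"
    using h1 h2 h3 pos by (intro frac_le) auto
  also have "\<dots> = 2 powr a * X powr (-(real k * (2 - b) - (real k - 1))) * Y powr (-(real l * b))"
    using X Y by (simp add: powr_minus powr_diff divide_simps)
  finally show ?thesis by (simp add: a_def M_def)
qed


lemma W2_bound:
  fixes c :: coeffs and k l :: nat and T :: real
  assumes tp: "trig_poly c" and pr: "proper c" and k: "k > 0" and l: "l > 1"
    and hT: "\<And>p. cmod (c p) * max (\<bar>real_of_int (fst p)\<bar>^k) (\<bar>real_of_int (snd p)\<bar>^l) \<le> T"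
  defines "b \<equiv> (real l + 1) / (2 * real l)"
  defines "sm \<equiv> real k * (2 - b) - (real k - 1)" and "sn \<equiv> real l * b"
  defines "K \<equiv> 2 powr ((real k - 1)/2) * (2 * Zh sm * (2 * Zh sn))"
  shows "W2_norm ((real k - 1)/2) 0 c \<le> T * sqrt K"
proof -
  define a where "a = (real k - 1)/2"
  let ?S = "{p. c p \<noteq> 0}"
  have fin: "finite ?S" using tp unfolding trig_poly_def .
  have T0: "T \<ge> 0" using hT[of "(0,0)"] k l by (simp add: power_0_left)
  have b1: "b < 1" using l by (simp add: b_def field_simps)
  have sm1: "sm > 1"
  proof -
    have "sm = real k * (1 - b) + 1" by (simp add: sm_def algebra_simps)
    moreover have "real k * (1 - b) > 0" using k b1 by simp
    ultimately show ?thesis by simp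
  qed
  have sn1: "sn > 1" using l by (simp add: sn_def b_def field_simps)
  have nz: "fst p \<noteq> 0 \<and> snd p \<noteq> 0" if "p \<in> ?S" for p
    using pr that unfolding proper_def by (cases p) auto
  have trm: "((1 + (of_int (fst p))\<^sup>2) powr (a/2) * (1 + (of_int (snd p))\<^sup>2) powr (0/2) * cmod (c p))\<^sup>2
      \<le> T\<^sup>2 * (2 powr a * (\<bar>real_of_int (fst p)\<bar> powr (-sm) * \<bar>real_of_int (snd p)\<bar> powr (-sn)))"
    if "p \<in> ?S" for p
  proof -
    define X where "X = \<bar>real_of_int (fst p)\<bar>"
    define Y where "Y = \<bar>real_of_int (snd p)\<bar>"
    have X1: "X \<ge> 1" and Y1: "Y \<ge> 1" using nz[OF that] by (auto simp: X_def Y_def)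
    define Mp where "Mp = max (X^k) (Y^l)"
    have Mp1: "Mp \<ge> 1" using X1 by (simp add: Mp_def le_max_iff_disj one_le_power)
    have cb: "cmod (c p) \<le> T / Mp"
      using hT[of p] Mp1 by (simp add: field_simps X_def Y_def Mp_def)
    have cb2: "(cmod (c p))\<^sup>2 \<le> T\<^sup>2 / Mp\<^sup>2"
      using power_mono[OF cb, of 2] by (simp add: power_divide)
    have "((1 + (of_int (fst p))\<^sup>2) powr (a/2) * (1 + (of_int (snd p))\<^sup>2) powr (0/2) * cmod (c p))\<^sup>2
        = (1 + X\<^sup>2) powr a * (cmod (c p))\<^sup>2"
    proof -
      have "((1 + X\<^sup>2) powr (a/2))\<^sup>2 = (1 + X\<^sup>2) powr a"
        by (simp add: power2_eq_square powr_add[symmetric])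
      moreover have "1 + (real_of_int (snd p))\<^sup>2 \<noteq> 0"
        by (metis add_pos_nonneg less_irrefl zero_le_power2 zero_less_one)
      ultimately show ?thesis by (simp add: X_def power_mult_distrib)
    qed
    also have "\<dots> \<le> (1 + X\<^sup>2) powr a * (T\<^sup>2 / Mp\<^sup>2)"
      by (intro mult_left_mono cb2) auto
    also have "\<dots> = T\<^sup>2 * ((1 + X\<^sup>2) powr a / Mp\<^sup>2)" by simp
    also have "\<dots> \<le> T\<^sup>2 * (2 powr a * X powr (-sm) * Y powr (-sn))"
      using w_bound_real[OF X1 Y1 k l]
      by (intro mult_left_mono) (auto simp: a_def Mp_def sm_def sn_def b_def)
    finally show ?thesis by (simp add: X_def Y_def mult.assoc)
  qed
  have "(\<Sum>p\<in>?S. ((1 + (of_int (fst p))\<^sup>2) powr (a/2) * (1 + (of_int (snd p))\<^sup>2) powr (0/2) * cmod (c p))\<^sup>2)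
      \<le> (\<Sum>p\<in>?S. T\<^sup>2 * (2 powr a * (\<bar>real_of_int (fst p)\<bar> powr (-sm) * \<bar>real_of_int (snd p)\<bar> powr (-sn))))"
    by (rule sum_mono) (rule trm)
  also have "\<dots> = T\<^sup>2 * 2 powr a * (\<Sum>p\<in>?S. \<bar>real_of_int (fst p)\<bar> powr (-sm) * \<bar>real_of_int (snd p)\<bar> powr (-sn))"
    by (simp add: sum_distrib_left mult.assoc)
  also have "\<dots> \<le> T\<^sup>2 * 2 powr a * (2 * Zh sm * (2 * Zh sn))"
    by (intro mult_left_mono pair_bound fin sm1 sn1) (use nz in auto)
  also have "\<dots> = T\<^sup>2 * K" by (simp add: K_def a_def)
  finally have le: "(\<Sum>p\<in>?S. ((1 + (of_int (fst p))\<^sup>2) powr (a/2) * (1 + (of_int (snd p))\<^sup>2) powr (0/2) * cmod (c p))\<^sup>2) \<le> T\<^sup>2 * K" .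
  have "W2_norm a 0 c \<le> sqrt (T\<^sup>2 * K)"
    unfolding W2_norm_def using le by (intro real_sqrt_le_mono) simp
  also have "\<dots> = T * sqrt K" using T0 by (simp add: real_sqrt_mult)
  finally show ?thesis by (simp add: a_def)
qed


lemma norm_factor: "cmod ((2 * of_real pi * \<i> * of_int m) ^ k) = (2 * pi * \<bar>real_of_int m\<bar>) ^ k"
  by (simp add: norm_power norm_mult)

lemma factor_ge: "\<bar>real_of_int m\<bar> ^ k \<le> (2 * pi * \<bar>real_of_int m\<bar>) ^ k"
proof -
  have "\<bar>real_of_int m\<bar> \<le> 2 * pi * \<bar>real_of_int m\<bar>"
    using pi_gt3 by (simp add: mult_le_cancel_right1 abs_ge_zero)
  then show ?thesis by (intro power_mono) auto
qed

lemma point_bound: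
  fixes k l N :: nat and \<mu> \<phi> :: "nat \<Rightarrow> coeffs"
  assumes tpm: "\<forall>j\<le>N. trig_poly (\<mu> j)"
    and e0: "\<forall>p. - d1 k (\<phi> 1) p = \<mu> 0 p"
    and e1: "\<forall>j\<in>{1..<N}. \<forall>p. d2 l (\<phi> j) p - d1 k (\<phi> (Suc j)) p = \<mu> j p"
    and eN: "\<forall>p. d2 l (\<phi> N) p = \<mu> N p"
    and j: "j \<in> {1..N}"
  shows "cmod (\<phi> j p) * max (\<bar>real_of_int (fst p)\<bar>^k) (\<bar>real_of_int (snd p)\<bar>^l) \<le> (\<Sum>i=0..N. L1_norm (\<mu> i))"
proof -
  obtain m n where p: "p = (m, n)" by (cases p)
  define a where "a = (2 * of_real pi * \<i> * of_int m :: complex) ^ k"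
  define b where "b = (2 * of_real pi * \<i> * of_int n :: complex) ^ l"
  have D1: "d1 k c (m, n) = a * c (m, n)" for c unfolding d1_def a_def by simp
  have D2: "d2 l c (m, n) = b * c (m, n)" for c unfolding d2_def b_def by simp
  define x where "x i = cmod (\<phi> i (m, n))" for i
  define u where "u i = cmod (\<mu> i (m, n))" for i
  have h0: "cmod a * x 1 = u 0"
    using e0[rule_format, of "(m,n)"] unfolding D1 x_def u_def by (metis norm_minus_cancel norm_mult)
  have h1: "cmod a * x (Suc i) \<le> cmod b * x i + u i" if "i \<in> {1..<N}" for i
  proof -
    have eq: "b * \<phi> i (m, n) - a * \<phi> (Suc i) (m, n) = \<mu> i (m, n)"
      using e1[rule_format, OF that, of "(m,n)"] unfolding D1 D2 .
    then have "a * \<phi> (Suc i) (m, n) = b * \<phi> i (m, n) - \<mu> i (m, n)" by (simp add: algebra_simps)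
    then have "cmod (a * \<phi> (Suc i) (m, n)) \<le> cmod (b * \<phi> i (m, n)) + cmod (\<mu> i (m, n))"
      by (metis norm_triangle_ineq4)
    then show ?thesis by (simp add: x_def u_def norm_mult)
  qed
  have h2: "cmod b * x i \<le> cmod a * x (Suc i) + u i" if "i \<in> {1..<N}" for i
  proof -
    have eq: "b * \<phi> i (m, n) - a * \<phi> (Suc i) (m, n) = \<mu> i (m, n)"
      using e1[rule_format, OF that, of "(m,n)"] unfolding D1 D2 .
    then have "b * \<phi> i (m, n) = a * \<phi> (Suc i) (m, n) + \<mu> i (m, n)" by (simp add: algebra_simps)
    then have "cmod (b * \<phi> i (m, n)) \<le> cmod (a * \<phi> (Suc i) (m, n)) + cmod (\<mu> i (m, n))"
      by (metis norm_triangle_ineq)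
    then show ?thesis by (simp add: x_def u_def norm_mult)
  qed
  have hN: "cmod b * x N = u N"
    using eN[rule_format, of "(m,n)"] unfolding D2 x_def u_def by (metis norm_mult)
  have cb: "max (cmod a) (cmod b) * x j \<le> (\<Sum>i\<le>N. u i)"
    by (rule chain_bound[OF _ _ _ h0 h1 h2 hN j]) (auto simp: u_def x_def)
  also have "\<dots> \<le> (\<Sum>i\<le>N. L1_norm (\<mu> i))"
    using tpm by (intro sum_mono) (auto simp: u_def intro: coeff_bound)
  also have "\<dots> = (\<Sum>i=0..N. L1_norm (\<mu> i))" by (simp add: atMost_atLeast0)
  finally have cb': "max (cmod a) (cmod b) * x j \<le> (\<Sum>i=0..N. L1_norm (\<mu> i))" .
  have mx: "max (\<bar>real_of_int m\<bar>^k) (\<bar>real_of_int n\<bar>^l) \<le> max (cmod a) (cmod b)"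
    unfolding a_def b_def norm_factor using factor_ge[of m k] factor_ge[of n l] by linarith
  have x0: "x j \<ge> 0" by (simp add: x_def)
  have "x j * max (\<bar>real_of_int m\<bar>^k) (\<bar>real_of_int n\<bar>^l) \<le> x j * max (cmod a) (cmod b)"
    by (rule mult_left_mono[OF mx x0])
  then have "x j * max (\<bar>real_of_int m\<bar>^k) (\<bar>real_of_int n\<bar>^l) \<le> max (cmod a) (cmod b) * x j"
    by (simp add: mult.commute)
  then show ?thesis using cb' by (simp add: p x_def)
qed

theorem lemma10:
  fixes k l N :: nat
  assumes "k > 0" and "l > 1" and "N > 0"
  shows "\<exists>C::real. \<forall>(\<mu>::nat \<Rightarrow> coeffs) (\<phi>::nat \<Rightarrow> coeffs).
    (\<forall>j\<le>N. trig_poly (\<mu> j) \<and> proper (\<mu> j)) \<and>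
    (\<forall>j\<in>{1..N}. trig_poly (\<phi> j) \<and> proper (\<phi> j)) \<and>
    (\<forall>p. - d1 k (\<phi> 1) p = \<mu> 0 p) \<and>
    (\<forall>j\<in>{1..<N}. \<forall>p. d2 l (\<phi> j) p - d1 k (\<phi> (Suc j)) p = \<mu> j p) \<and>
    (\<forall>p. d2 l (\<phi> N) p = \<mu> N p)
    \<longrightarrow> (\<Sum>j=1..N. W2_norm ((real k - 1) / 2) 0 (\<phi> j)) \<le> C * (\<Sum>j=0..N. L1_norm (\<mu> j))"
proof -
  define b where "b = (real l + 1) / (2 * real l)"
  define K where "K = 2 powr ((real k - 1)/2) * (2 * Zh (real k * (2 - b) - (real k - 1)) * (2 * Zh (real l * b)))"
  show ?thesis
  proof (intro exI[of _ "real N * sqrt K"] allI impI)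
    fix \<mu> \<phi> :: "nat \<Rightarrow> coeffs"
    assume H: "(\<forall>j\<le>N. trig_poly (\<mu> j) \<and> proper (\<mu> j)) \<and>
      (\<forall>j\<in>{1..N}. trig_poly (\<phi> j) \<and> proper (\<phi> j)) \<and>
      (\<forall>p. - d1 k (\<phi> 1) p = \<mu> 0 p) \<and>
      (\<forall>j\<in>{1..<N}. \<forall>p. d2 l (\<phi> j) p - d1 k (\<phi> (Suc j)) p = \<mu> j p) \<and>
      (\<forall>p. d2 l (\<phi> N) p = \<mu> N p)"
    define T where "T = (\<Sum>j=0..N. L1_norm (\<mu> j))"
    have each: "W2_norm ((real k - 1) / 2) 0 (\<phi> j) \<le> T * sqrt K" if j: "j \<in> {1..N}" for j
      unfolding K_def b_def
    proof (rule W2_bound)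
      show "trig_poly (\<phi> j)" "proper (\<phi> j)" using H j by auto
      show "0 < k" "1 < l" using assms by auto
      show "cmod (\<phi> j p) * max (\<bar>real_of_int (fst p)\<bar> ^ k) (\<bar>real_of_int (snd p)\<bar> ^ l) \<le> T" for p
        unfolding T_def by (rule point_bound) (use H j in auto)
    qed
    have "(\<Sum>j=1..N. W2_norm ((real k - 1) / 2) 0 (\<phi> j)) \<le> (\<Sum>j=1..N. T * sqrt K)"
      by (rule sum_mono) (rule each)
    also have "\<dots> = real N * sqrt K * T" by simp
    finally show "(\<Sum>j=1..N. W2_norm ((real k - 1) / 2) 0 (\<phi> j)) \<le> real N * sqrt K * (\<Sum>j=0..N. L1_norm (\<mu> j))"
      by (simp add: T_def)
  qed
qed

end
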